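(* The growth-rate of the family of NSG-compositions with maximum $5$ having a unique part equal to $5$ is at most the growth-rate $\gamma_4$ of the family of NSG-compositions with maximum $4$.
   Context: An NSG-composition is a composition $x_1+\cdots+x_{m-1}$ of positive integers satisfying $x_{s+t}\le x_s+x_t$ and $x_{m-s-t}\le x_{m-s}+x_{m-t}+1$ for all $s,t\ge1$, $s+t<m$ (equivalently, the Kunz vector of a numerical semigroup of multiplicity $m$); its genus is $\sum x_j$ and its maximum is $\max_j x_j$. The growth-rate of a family is $\limsup_{g\to\infty}a_g^{1/g}$ with $a_g$ the number of members of genus $g$. *)

theory Defs
  imports Complex_Main "HOL-Library.Liminf_Limsup" "HOL-Library.Extended_Real"
begin

text \<open>A composition x_1 + ... + x_{m-1} is represented by the list xs = [x_1,...,x_{m-1}],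
  so m = length xs + 1 and x_j = xs ! (j - 1).\<close>

definition nsg_comp :: "nat list \<Rightarrow> bool" where
  "nsg_comp xs \<longleftrightarrow>
     (let m = length xs + 1 in
       (\<forall>x\<in>set xs. 0 < x) \<and>
       (\<forall>s t. 1 \<le> s \<longrightarrow> 1 \<le> t \<longrightarrow> s + t < m \<longrightarrow>
          xs ! (s + t - 1) \<le> xs ! (s - 1) + xs ! (t - 1) \<and>
          xs ! (m - s - t - 1) \<le> xs ! (m - s - 1) + xs ! (m - t - 1) + 1))"

definition genus :: "nat list \<Rightarrow> nat" where
  "genus xs = sum_list xs"

definition comp_max :: "nat list \<Rightarrow> nat" where
  "comp_max xs = Max (set xs)"

definition growth_rate :: "nat list set \<Rightarrow> ereal" where
  "growth_rate F = limsup (\<lambda>g. ereal (root g (real (card {xs \<in> F. genus xs = g}))))"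

end

theory Submission
  imports Defs "HOL-Analysis.Analysis"
begin

lemma dec_ok:
  fixes xs ys :: "nat list"
  assumes "i < length xs" "ys ! i = 4"
    "\<forall>j<length xs. j \<noteq> i \<longrightarrow> ys!j = xs!j"
    "\<forall>j<length xs. ys!j \<le> 4" "\<forall>j<length xs. 1 \<le> ys!j"
    "\<forall>j<length xs. ys!j \<le> xs!j"
    "p < length xs" "a < length xs" "b < length xs"
    "xs!p \<le> xs!a + xs!b + c"
  shows "ys!p \<le> ys!a + ys!b + c"
proof (cases "a = i \<or> b = i")
  case True
  have "ys!p \<le> 4" using assms by auto
  moreover have "1 \<le> ys!a" "1 \<le> ys!b" using assms by auto
  ultimately show ?thesis using True assms(2) by auto
next
  case False
  then have "ys!a = xs!a" "ys!b = xs!b" using assms by auto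
  moreover have "ys!p \<le> xs!p" using assms by auto
  ultimately show ?thesis using assms(10) by linarith
qed

lemma length_le_genus:
  "\<forall>x\<in>set xs. 0 < (x::nat) \<Longrightarrow> length xs \<le> sum_list xs"
  by (induction xs) auto

lemma key:
  assumes "nsg_comp xs" "xs \<noteq> []" "comp_max xs = 5" "length (filter (\<lambda>x. x = 5) xs) = 1"
  shows "\<exists>ys i. (nsg_comp ys \<and> ys \<noteq> [] \<and> comp_max ys = 4) \<and> i < length xs
           \<and> xs = ys[i:=5] \<and> genus ys + 1 = genus xs"
proof -
  have fin: "card {i. i < length xs \<and> xs!i = 5} = 1"
    using assms(4) by (simp add: length_filter_conv_card)
  then obtain i where iset: "{i. i < length xs \<and> xs!i = 5} = {i}"
    using card_1_singletonE by blast
  have il: "i < length xs" and xi: "xs!i = 5" using iset by auto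
  have uniq: "\<forall>j<length xs. j \<noteq> i \<longrightarrow> xs!j \<noteq> 5" using iset by auto
  have le5: "\<forall>j<length xs. xs!j \<le> 5"
  proof (intro allI impI)
    fix j assume "j < length xs"
    then have "xs!j \<in> set xs" by simp
    then show "xs!j \<le> 5" using assms(3) unfolding comp_max_def by (metis Max_ge finite_set)
  qed
  have pos: "\<forall>x\<in>set xs. 0 < x" using assms(1) unfolding nsg_comp_def Let_def by simp
  define ys where "ys = xs[i:=4]"
  have len: "length ys = length xs" by (simp add: ys_def)
  have ysi: "ys!i = 4" using il by (simp add: ys_def)
  have oth: "\<forall>j<length xs. j \<noteq> i \<longrightarrow> ys!j = xs!j" by (simp add: ys_def)
  have le4: "\<forall>j<length xs. ys!j \<le> 4"
  proof (intro allI impI)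
    fix j assume j: "j < length xs"
    show "ys!j \<le> 4"
    proof (cases "j = i")
      case True then show ?thesis using ysi by simp
    next
      case False
      then have "ys!j = xs!j" "xs!j \<noteq> 5" "xs!j \<le> 5" using oth uniq le5 j by auto
      then show ?thesis by linarith
    qed
  qed
  have posy: "\<forall>j<length xs. 1 \<le> ys!j"
  proof (intro allI impI)
    fix j assume j: "j < length xs"
    show "1 \<le> ys!j"
    proof (cases "j = i")
      case True then show ?thesis using ysi by simp
    next
      case False
      then have "ys!j = xs!j" "xs!j \<in> set xs" using oth j by auto
      then show ?thesis using pos by fastforce
    qed
  qed
  have lexy: "\<forall>j<length xs. ys!j \<le> xs!j" 
    using oth ysi xi by (metis order.refl eval_nat_numeral(3) le_SucI)
  have posy': "\<forall>x\<in>set ys. 0 < x"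
  proof
    fix x assume "x \<in> set ys"
    then obtain j where "j < length ys" "x = ys!j" by (auto simp: in_set_conv_nth)
    then show "0 < x" using posy len by fastforce
  qed
  have nsg: "nsg_comp ys"
    unfolding nsg_comp_def Let_def
  proof (intro conjI allI impI posy')
    fix s t :: nat assume st: "1 \<le> s" "1 \<le> t" "s + t < length ys + 1"
    have c: "xs ! (s + t - 1) \<le> xs ! (s - 1) + xs ! (t - 1) \<and>
          xs ! (length xs + 1 - s - t - 1) \<le> xs ! (length xs + 1 - s - 1) + xs ! (length xs + 1 - t - 1) + 1"
      using assms(1) st len unfolding nsg_comp_def Let_def by auto
    show "ys ! (s + t - 1) \<le> ys ! (s - 1) + ys ! (t - 1)"
      using dec_ok[OF il ysi oth le4 posy lexy, of "s+t-1" "s-1" "t-1" 0] c st len by auto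
    show "ys ! (length ys + 1 - s - t - 1) \<le> ys ! (length ys + 1 - s - 1) + ys ! (length ys + 1 - t - 1) + 1"
      using dec_ok[OF il ysi oth le4 posy lexy, of "length xs + 1 - s - t - 1" "length xs + 1 - s - 1" "length xs + 1 - t - 1" 1] c st len by auto
  qed
  have ne: "ys \<noteq> []" using assms(2) len by auto
  have mx: "comp_max ys = 4"
    unfolding comp_max_def
  proof (rule Max_eqI)
    show "finite (set ys)" by simp
    show "y \<le> 4" if "y \<in> set ys" for y using that le4 len by (metis in_set_conv_nth)
    show "4 \<in> set ys" using ysi il len by (metis nth_mem)
  qed
  have bk: "xs = ys[i:=5]" using xi by (simp add: ys_def) (metis list_update_id)
  have g: "genus ys + 1 = genus xs"
  proof -
    have "sum_list ys = sum_list xs + 4 - 5" unfolding ys_def using sum_list_update[OF il, of 4] xi by simp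
    moreover have "5 \<le> sum_list xs" using elem_le_sum_list[OF il] xi by simp
    ultimately show ?thesis unfolding genus_def by simp
  qed
  show ?thesis using nsg ne mx il bk g by blast
qed


lemma finB: "finite {xs. (nsg_comp xs \<and> xs \<noteq> [] \<and> comp_max xs = 4) \<and> genus xs = n}"
proof (rule finite_subset[OF _ finite_lists_length_le[of "{..(4::nat)}" n]])
  have 1: "set xs \<subseteq> {..4}" if "comp_max xs = 4" for xs
  proof
    fix x assume "x \<in> set xs"
    then have "x \<le> Max (set xs)" by simp
    then show "x \<in> {..4}" using that unfolding comp_max_def by simp
  qed
  have 2: "length xs \<le> genus xs" if "nsg_comp xs" for xs
  proof -
    have "\<forall>x\<in>set xs. 0 < x" using that unfolding nsg_comp_def Let_def by simp
    then show ?thesis unfolding genus_def by (rule length_le_genus)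
  qed
  show "{xs. (nsg_comp xs \<and> xs \<noteq> [] \<and> comp_max xs = 4) \<and> genus xs = n}
        \<subseteq> {xs. set xs \<subseteq> {..4} \<and> length xs \<le> n}"
  proof (rule subsetI)
    fix xs assume "xs \<in> {xs. (nsg_comp xs \<and> xs \<noteq> [] \<and> comp_max xs = 4) \<and> genus xs = n}"
    then have "nsg_comp xs" "comp_max xs = 4" "genus xs = n" by auto
    then show "xs \<in> {xs. set xs \<subseteq> {..4} \<and> length xs \<le> n}" using 1 2 by fastforce
  qed
qed simp

lemma cardle:
  "card {xs. (nsg_comp xs \<and> xs \<noteq> [] \<and> comp_max xs = 5 \<and> length (filter (\<lambda>x. x = 5) xs) = 1) \<and> genus xs = g}
   \<le> card {xs. (nsg_comp xs \<and> xs \<noteq> [] \<and> comp_max xs = 4) \<and> genus xs = g - 1} * g"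
proof -
  let ?B = "{xs. (nsg_comp xs \<and> xs \<noteq> [] \<and> comp_max xs = 4) \<and> genus xs = g - 1}"
  have sub: "{xs. (nsg_comp xs \<and> xs \<noteq> [] \<and> comp_max xs = 5 \<and> length (filter (\<lambda>x. x = 5) xs) = 1) \<and> genus xs = g}
     \<subseteq> (\<lambda>(ys,i). ys[i:=5]) ` (?B \<times> {..<g})"
  proof
    fix xs assume "xs \<in> {xs. (nsg_comp xs \<and> xs \<noteq> [] \<and> comp_max xs = 5 \<and> length (filter (\<lambda>x. x = 5) xs) = 1) \<and> genus xs = g}"
    then have h: "nsg_comp xs" "xs \<noteq> []" "comp_max xs = 5" "length (filter (\<lambda>x. x = 5) xs) = 1" "genus xs = g" by auto
    obtain ys i where yi: "nsg_comp ys" "ys \<noteq> []" "comp_max ys = 4" "i < length xs" "xs = ys[i:=5]" "genus ys + 1 = genus xs"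
      using key[OF h(1-4)] by blast
    have "\<forall>x\<in>set xs. 0 < x" using h(1) unfolding nsg_comp_def Let_def by simp
    then have "length xs \<le> g" using h(5) length_le_genus unfolding genus_def by blast
    then have "(ys, i) \<in> ?B \<times> {..<g}" using yi h(5) by auto
    then show "xs \<in> (\<lambda>(ys,i). ys[i:=5]) ` (?B \<times> {..<g})" using yi(5) by force
  qed
  have "card {xs. (nsg_comp xs \<and> xs \<noteq> [] \<and> comp_max xs = 5 \<and> length (filter (\<lambda>x. x = 5) xs) = 1) \<and> genus xs = g}
     \<le> card ((\<lambda>(ys,i). ys[i:=5]) ` (?B \<times> {..<g}))"
    by (rule card_mono[OF finite_imageI[OF finite_cartesian_product[OF finB]] sub]) simp
  also have "\<dots> \<le> card (?B \<times> {..<g})" by (rule card_image_le) (use finB[of "g-1"] in simp)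
  also have "\<dots> = card ?B * g" by (simp add: card_cartesian_product)
  finally show ?thesis .
qed

theorem proposition11p2:
  shows "growth_rate {xs. nsg_comp xs \<and> xs \<noteq> [] \<and> comp_max xs = 5 \<and>
                          length (filter (\<lambda>x. x = 5) xs) = 1}
         \<le> growth_rate {xs. nsg_comp xs \<and> xs \<noteq> [] \<and> comp_max xs = 4}"
proof -
  define a where "a g = real (card {xs. (nsg_comp xs \<and> xs \<noteq> [] \<and> comp_max xs = 5 \<and> length (filter (\<lambda>x. x = 5) xs) = 1) \<and> genus xs = g})" for g
  define b where "b g = real (card {xs. (nsg_comp xs \<and> xs \<noteq> [] \<and> comp_max xs = 4) \<and> genus xs = g})" for g
  define v where "v g = root g (b g)" for g
  have ab: "a g \<le> b (g - 1) * real g" for g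
  proof -
    have "real (card {xs. (nsg_comp xs \<and> xs \<noteq> [] \<and> comp_max xs = 5 \<and> length (filter (\<lambda>x. x = 5) xs) = 1) \<and> genus xs = g})
       \<le> real (card {xs. (nsg_comp xs \<and> xs \<noteq> [] \<and> comp_max xs = 4) \<and> genus xs = g - 1} * g)"
      by (rule of_nat_mono[OF cardle])
    then show ?thesis unfolding a_def b_def by (simp only: of_nat_mult)
  qed
  have bnn: "0 \<le> b g" for g by (simp add: b_def)
  have ev: "eventually (\<lambda>g. ereal (root g (a g)) \<le> ereal (root g (real g)) * ereal (v (g - 1))) sequentially"
    unfolding eventually_sequentially
  proof (intro exI allI impI)
    fix g :: nat assume g: "2 \<le> g"
    have "root g (a g) \<le> root g (b (g - 1) * real g)"
      using ab g by (simp add: real_root_le_iff)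
    also have "\<dots> = root g (real g) * root g (b (g - 1))" by (simp add: real_root_mult)
    also have "\<dots> \<le> root g (real g) * v (g - 1)"
    proof (rule mult_left_mono)
      show "0 \<le> root g (real g)" by (rule real_root_ge_zero) simp
      show "root g (b (g - 1)) \<le> v (g - 1)"
      proof (cases "b (g - 1) = 0")
        case True then show ?thesis by (simp add: v_def)
      next
        case False
        then have "1 \<le> b (g - 1)" unfolding b_def by simp
        then show ?thesis unfolding v_def using g by (intro real_root_decreasing) auto
      qed
    qed
    finally show "ereal (root g (a g)) \<le> ereal (root g (real g)) * ereal (v (g - 1))" by simp
  qed
  have "limsup (\<lambda>g. ereal (root g (a g))) \<le> limsup (\<lambda>g. ereal (root g (real g)) * ereal (v (g - 1)))"
    by (rule Limsup_mono[OF ev])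
  also have "\<dots> = 1 * limsup (\<lambda>g. ereal (v (g - 1)))"
  proof (rule ereal_limsup_lim_mult)
    show "(\<lambda>g. ereal (root g (real g))) \<longlonglongrightarrow> 1"
      using LIMSEQ_root by (simp add: one_ereal_def tendsto_ereal)
  qed simp_all
  also have "\<dots> = limsup (\<lambda>g. ereal (v g))"
    using limsup_shift[of "\<lambda>g. ereal (v (g - 1))"] by simp
  finally show ?thesis unfolding growth_rate_def a_def b_def v_def by simp
qed

end
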